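(* Let $n\ge2$, $0<s<1$, fix $N\in[1,\infty)$, let $\hat U=\{x\in\mathbb{R}^n:\|x\|_N\le 1\}$ and $U=\tfrac{\ell_U}{2}\hat U+q$ with $\ell_U>0$, $q\in\mathbb{R}^n$. Then for all $1\le i<j\le n$ and $1\le k<m\le n$, $$\langle {\bf I}_{ij},{\bf I}_{km}\rangle_{U\times U}=\hat C\,\ell_U^{n+2-2s}\,\delta_{ik}\delta_{jm},$$ where $\hat C$ is a constant depending on $n$ and $s$ (and $N$) but not on $i,j,k,m$, $\ell_U$ or $q$, and $\delta$ is the Kronecker delta.
   Context: $\|x\|_N=(\sum_{k=1}^n|x_k|^N)^{1/N}$. $I_{ij}\in\mathbb{R}^{n\times n}$ is the matrix with $(I_{ij})_{ij}=1$, $(I_{ij})_{ji}=-1$ and all other entries $0$, and ${\bf I}_{ij}(x)=I_{ij}x$. For $E\subset\mathbb{R}^n$ and vector fields ${\bf u},{\bf v}$, $\langle{\bf u},{\bf v}\rangle_{E\times E}=\int_E\int_E\frac{({\bf u}(x)-{\bf u}(y))\cdot({\bf v}(x)-{\bf v}(y))}{|x-y|^{n+2s}}\,dy\,dx$. *)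

theory Defs
  imports "HOL-Analysis.Analysis"
begin

definition lN_norm :: "real \<Rightarrow> real^'n \<Rightarrow> real" where
  "lN_norm N x = (\<Sum>k\<in>UNIV. \<bar>x $ k\<bar> powr N) powr (1 / N)"

definition lN_ball :: "real \<Rightarrow> (real^'n) set" where
  "lN_ball N = {x. lN_norm N x \<le> 1}"

definition Imat :: "'n \<Rightarrow> 'n \<Rightarrow> real^'n^'n" where
  "Imat i j = (\<chi> a b. if a = i \<and> b = j then 1 else if a = j \<and> b = i then -1 else 0)"

definition Ifield :: "'n \<Rightarrow> 'n \<Rightarrow> real^'n \<Rightarrow> real^'n" where
  "Ifield i j x = Imat i j *v x"

definition frac_form :: "real \<Rightarrow> (real^'n) set \<Rightarrow> (real^'n \<Rightarrow> real^'n) \<Rightarrow> (real^'n \<Rightarrow> real^'n) \<Rightarrow> real" where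
  "frac_form s E u v =
     (LINT x:E|lborel. LINT y:E|lborel.
        ((u x - u y) \<bullet> (v x - v y)) / (norm (x - y) powr (real CARD('n) + 2 * s)))"

end

theory Submission
  imports Defs
begin


lemma integral_transform:
  fixes T :: "'a::euclidean_space \<Rightarrow> 'a" and f :: "'a \<Rightarrow> real"
  assumes dens: "lborel = density (distr lborel borel T) (\<lambda>_. ennreal d)" and d: "d \<ge> 0"
    and Tm: "T \<in> borel_measurable borel" and fm: "f \<in> borel_measurable borel"
  shows "integral\<^sup>L lborel f = d * integral\<^sup>L lborel (\<lambda>x. f (T x))"
proof -
  have "integral\<^sup>L lborel f = integral\<^sup>L (density (distr lborel borel T) (\<lambda>_. ennreal d)) f"
    by (rule arg_cong[OF dens])
  also have "\<dots> = integral\<^sup>L (distr lborel borel T) (\<lambda>x. d *\<^sub>R f x)"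
    by (rule integral_density) (use d fm in auto)
  also have "\<dots> = integral\<^sup>L lborel (\<lambda>x. d *\<^sub>R f (T x))"
    by (rule integral_distr) (use Tm fm in auto)
  finally show ?thesis by simp
qed

lemma double_transform:
  fixes T L :: "real^'n \<Rightarrow> real^'n" and h :: "real^'n \<Rightarrow> real"
  assumes dens: "lborel = density (distr lborel borel T) (\<lambda>_. ennreal d)" and d: "d \<ge> 0"
   and Tm[measurable]: "T \<in> borel_measurable borel" and hm[measurable]: "h \<in> borel_measurable borel"
   and A[measurable]: "A \<in> sets borel" and E[measurable]: "E \<in> sets borel"
   and AE: "\<And>y. T y \<in> A \<longleftrightarrow> y \<in> E"
   and Tdiff: "\<And>x y. T x - T y = L (x - y)"
  shows "(LINT x:A|lborel. LINT y:A|lborel. h (x - y)) = d * d * (LINT x:E|lborel. LINT y:E|lborel. h (L (x - y)))"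
proof -
  have ind: "indicator A (T y) = (indicator E y :: real)" for y
    using AE[of y] by (simp add: indicator_def)
  have inner: "(LINT y:A|lborel. h(x-y)) = d * (LINT y:E|lborel. h(x - T y))" for x
    unfolding set_lebesgue_integral_def
    by (subst integral_transform[OF dens d Tm]) (simp_all add: ind)
  have m: "(\<lambda>x. LINT y:E|lborel. h(x - T y)) \<in> borel_measurable borel"
    unfolding set_lebesgue_integral_def by measurable
  have "(LINT x:A|lborel. LINT y:A|lborel. h (x - y)) = (LINT x:A|lborel. d * (LINT y:E|lborel. h(x - T y)))"
    by (simp add: inner)
  also have "\<dots> = d * (LINT x:A|lborel. (LINT y:E|lborel. h(x - T y)))"
    by simp
  also have "(LINT x:A|lborel. (LINT y:E|lborel. h(x - T y))) = d * (LINT x:E|lborel. (LINT y:E|lborel. h(T x - T y)))"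
    unfolding set_lebesgue_integral_def[of _ A]  set_lebesgue_integral_def[of _ E "\<lambda>x. set_lebesgue_integral _ _ _"]
    by (subst integral_transform[OF dens d Tm]) (use m in \<open>simp_all add: ind set_lebesgue_integral_def\<close>)
  finally show ?thesis by (simp add: Tdiff)
qed



lemma Basis_cart_range: "(Basis :: (real^'n) set) = range (\<lambda>i. axis i 1)"
  by (auto simp: Basis_vec_def)

lemma prod_Basis_cart:
  "(\<Prod>b\<in>(Basis :: (real^'n) set). f b) = (\<Prod>i\<in>UNIV. f (axis i 1))"
proof -
  have "inj (\<lambda>i::'n. axis i (1::real))" by (auto simp: inj_def axis_eq_axis)
  then show ?thesis unfolding Basis_cart_range by (simp add: prod.reindex)
qed

lemma lborel_perm_flip:
  fixes \<pi> :: "'n::finite \<Rightarrow> 'n" and e :: "'n \<Rightarrow> real"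
  assumes bij: "bij \<pi>" and e: "\<And>a. e a = 1 \<or> e a = -1"
  shows "distr lborel borel (\<lambda>x::real^'n. \<chi> a. e a * x $ \<pi> a) = lborel"
proof (rule lborel_eqI[symmetric])
  let ?P = "\<lambda>x::real^'n. \<chi> a. e a * x $ \<pi> a"
  have Pm[measurable]: "?P \<in> borel_measurable borel"
  proof -
    have "linear ?P" by (rule linearI) (auto simp: vec_eq_iff algebra_simps)
    then show ?thesis by (intro borel_measurable_continuous_onI linear_continuous_on) (simp add: linear_conv_bounded_linear[symmetric])
  qed
  fix l u :: "real^'n" assume le: "\<And>b. b \<in> Basis \<Longrightarrow> l \<bullet> b \<le> u \<bullet> b"
  then have le': "l $ a \<le> u $ a" for a using le[of "axis a 1"] by (simp add: inner_axis Basis_cart_range)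
  define \<rho> where "\<rho> = inv \<pi>"
  have \<pi>\<rho>: "\<pi> (\<rho> b) = b" for b unfolding \<rho>_def using bij by (simp add: bij_is_inj bij_is_surj surj_f_inv_f)
  have \<rho>\<pi>: "\<rho> (\<pi> b) = b" for b unfolding \<rho>_def using bij by (simp add: bij_is_inj bij_is_surj surj_f_inv_f)
  have bij\<rho>: "bij \<rho>" unfolding \<rho>_def by (simp add: bij bij_imp_bij_inv)
  define l' :: "real^'n" where "l' = (\<chi> b. if e (\<rho> b) = 1 then l $ \<rho> b else - u $ \<rho> b)"
  define u' :: "real^'n" where "u' = (\<chi> b. if e (\<rho> b) = 1 then u $ \<rho> b else - l $ \<rho> b)"
  have pre: "?P -` box l u = box l' u'"
  proof -
    have "x \<in> ?P -` box l u \<longleftrightarrow> (\<forall>a. l $ a < e a * x $ \<pi> a \<and> e a * x $ \<pi> a < u $ a)" for x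
      by (simp add: mem_box_cart)
    also have "\<dots> x \<longleftrightarrow> (\<forall>b. l $ \<rho> b < e (\<rho> b) * x $ b \<and> e (\<rho> b) * x $ b < u $ \<rho> b)" for x
      by (metis \<pi>\<rho> \<rho>\<pi>)
    also have "\<dots> x \<longleftrightarrow> x \<in> box l' u'" for x
    proof -
      have "(l $ \<rho> b < e (\<rho> b) * x $ b \<and> e (\<rho> b) * x $ b < u $ \<rho> b) \<longleftrightarrow> (l' $ b < x $ b \<and> x $ b < u' $ b)" for b
        using e[of "\<rho> b"] unfolding l'_def u'_def by auto
      then show ?thesis unfolding mem_box_cart by blast
    qed
    finally show ?thesis by blast
  qed
  have "emeasure (distr lborel borel ?P) (box l u) = emeasure lborel (box l' u')"
    by (subst emeasure_distr) (simp_all add: pre)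
  also have "\<dots> = (\<Prod>b\<in>Basis. (u' - l') \<bullet> b)"
  proof (rule emeasure_lborel_box)
    fix b :: "real^'n" assume "b \<in> Basis"
    then obtain i where "b = axis i 1" by (auto simp: Basis_cart_range)
    then show "l' \<bullet> b \<le> u' \<bullet> b" using le' e[of "\<rho> i"] by (auto simp: inner_axis l'_def u'_def)
  qed
  also have "\<dots> = (\<Prod>i\<in>UNIV. u $ \<rho> i - l $ \<rho> i)"
    unfolding prod_Basis_cart by (auto simp: inner_axis l'_def u'_def intro!: arg_cong[where f=ennreal] prod.cong)
  also have "\<dots> = (\<Prod>i\<in>UNIV. u $ i - l $ i)"
    using prod.reindex_bij_betw[of \<rho> UNIV UNIV "\<lambda>i. u $ i - l $ i"] bij\<rho> by simp
  also have "\<dots> = (\<Prod>b\<in>Basis. (u - l) \<bullet> b)"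
    unfolding prod_Basis_cart by (simp add: inner_axis)
  finally show "emeasure (distr lborel borel ?P) (box l u) = (\<Prod>b\<in>Basis. (u - l) \<bullet> b)" .
qed simp



definition hf :: "real \<Rightarrow> 'n::finite \<Rightarrow> 'n \<Rightarrow> 'n \<Rightarrow> 'n \<Rightarrow> real^'n \<Rightarrow> real" where
  "hf c i j k m w = ((Imat i j *v w) \<bullet> (Imat k m *v w)) / norm w powr c"

lemma Imat_mult: assumes ij: "i \<noteq> j" shows "Imat i j *v w = w $ j *\<^sub>R axis i 1 - w $ i *\<^sub>R axis j 1"
proof -
 have "(Imat i j *v w) $ a = (w $ j *\<^sub>R axis i 1 - w $ i *\<^sub>R axis j 1) $ a" for a
 proof -
  have "(Imat i j *v w) $ a = (\<Sum>b\<in>UNIV. (if a = i \<and> b = j then 1 else if a = j \<and> b = i then -1 else 0) * w $ b)"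
    by (simp add: Imat_def matrix_vector_mult_def)
  also have "\<dots> = (if a = i then w $ j else if a = j then - w $ i else 0)"
  proof (cases "a = i")
    case True then show ?thesis using ij by (simp add: if_distrib[where f="\<lambda>x. x * _"] cong: if_cong)
  next
    case False
    then show ?thesis by (cases "a = j") (simp_all add: if_distrib[where f="\<lambda>x. x * _"] cong: if_cong)
  qed
  also have "\<dots> = (w $ j *\<^sub>R axis i 1 - w $ i *\<^sub>R axis j 1) $ a"
    using ij by (auto simp: axis_def)
  finally show ?thesis .
 qed
 then show ?thesis by (simp add: vec_eq_iff)
qed

lemma dot_formula:
  assumes "i \<noteq> j" "k \<noteq> m"
  shows "(Imat i j *v w) \<bullet> (Imat k m *v w) =
    (if i = k then w$j * w$m else 0) - (if i = m then w$j * w$k else 0)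
    - (if j = k then w$i * w$m else 0) + (if j = m then w$i * w$k else 0)"
  using assms by (simp add: Imat_mult inner_diff_left inner_diff_right inner_axis_axis)

lemma hf_meas[measurable]: "hf c i j k m \<in> borel_measurable borel"
proof -
  have "(\<lambda>w. (Imat i j *v w) \<bullet> (Imat k m *v w)) \<in> borel_measurable borel"
    by (intro borel_measurable_continuous_onI continuous_intros linear_continuous_on 
        matrix_vector_mul_bounded_linear)
  then show ?thesis unfolding hf_def[abs_def] by measurable
qed



definition PF :: "('n::finite \<Rightarrow> 'n) \<Rightarrow> ('n \<Rightarrow> real) \<Rightarrow> real^'n \<Rightarrow> real^'n" where
  "PF \<pi> e x = (\<chi> a. e a * x $ \<pi> a)"

lemma PF_linear: "linear (PF \<pi> e)"
  by (rule linearI) (auto simp: vec_eq_iff algebra_simps PF_def)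

lemma PF_meas[measurable]: "PF \<pi> e \<in> borel_measurable borel"
  using PF_linear by (intro borel_measurable_continuous_onI linear_continuous_on) (simp add: linear_conv_bounded_linear[symmetric])

lemma sum_PF:
  assumes "bij \<pi>" "\<And>a. e a = 1 \<or> e a = -1" "\<And>t. g (- t) = g t"
  shows "(\<Sum>a\<in>UNIV. g (PF \<pi> e x $ a)) = (\<Sum>a\<in>UNIV. g (x $ a))"
proof -
  have "g (PF \<pi> e x $ a) = g (x $ \<pi> a)" for a
    using assms(2)[of a] assms(3) by (auto simp: PF_def)
  then have "(\<Sum>a\<in>UNIV. g (PF \<pi> e x $ a)) = (\<Sum>a\<in>UNIV. g (x $ \<pi> a))" by simp
  also have "\<dots> = (\<Sum>a\<in>UNIV. g (x $ a))"
    using sum.reindex_bij_betw[of \<pi> UNIV UNIV "\<lambda>a. g (x $ a)"] assms(1) by simp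
  finally show ?thesis .
qed

lemma norm_PF:
  assumes "bij \<pi>" "\<And>a. e a = 1 \<or> e a = -1"
  shows "norm (PF \<pi> e x) = norm x"
  unfolding norm_vec_def L2_set_def using sum_PF[OF assms, of "\<lambda>t. (norm t)^2"] by simp

lemma lN_PF:
  assumes "bij \<pi>" "\<And>a. e a = 1 \<or> e a = -1"
  shows "lN_norm N (PF \<pi> e x) = lN_norm N x"
  unfolding lN_norm_def using sum_PF[OF assms, of "\<lambda>t. \<bar>t\<bar> powr N"] by simp

lemma lN_ball_borel[measurable]: "lN_ball N \<in> sets borel"
proof -
  have "(\<lambda>x::real^'n. lN_norm N x) \<in> borel_measurable borel"
    unfolding lN_norm_def[abs_def] by measurable
  then show ?thesis unfolding lN_ball_def by measurable
qed

definition GG :: "(real^'n) set \<Rightarrow> (real^'n \<Rightarrow> real) \<Rightarrow> real" where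
  "GG E h = (LINT x:E|lborel. LINT y:E|lborel. h (x - y))"

lemma GG_PF:
  assumes "bij \<pi>" "\<And>a. e a = 1 \<or> e a = -1" and hm: "h \<in> borel_measurable borel"
  shows "GG (lN_ball N) h = GG (lN_ball N) (\<lambda>w. h (PF \<pi> e w))"
proof -
  have dens: "lborel = density (distr lborel borel (PF \<pi> e)) (\<lambda>_. ennreal 1)"
    using lborel_perm_flip[OF assms(1,2)] by (simp add: PF_def[abs_def] density_1)
  have "GG (lN_ball N) h = 1 * 1 * (LINT x:lN_ball N|lborel. LINT y:lN_ball N|lborel. h (PF \<pi> e (x - y)))"
    unfolding GG_def
  proof (rule double_transform[OF dens])
    show "PF \<pi> e y \<in> lN_ball N \<longleftrightarrow> y \<in> lN_ball N" for y
      by (simp add: lN_ball_def lN_PF[OF assms(1,2)])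
    show "PF \<pi> e x - PF \<pi> e y = PF \<pi> e (x - y)" for x y
      by (simp add: PF_def vec_eq_iff algebra_simps)
  qed (use hm in auto)
  then show ?thesis by (simp add: GG_def)
qed

lemma GG_scale:
  fixes l :: real and q :: "real^'n"
  assumes l: "l > 0" and hm: "h \<in> borel_measurable borel"
  shows "GG ((\<lambda>x. (l / 2) *\<^sub>R x + q) ` lN_ball N) h
       = (l/2)^CARD('n) * (l/2)^CARD('n) * GG (lN_ball N) (\<lambda>w. h ((l/2) *\<^sub>R w))"
proof -
  let ?T = "\<lambda>x::real^'n. q + (l/2) *\<^sub>R x"
  have img: "(\<lambda>x. (l / 2) *\<^sub>R x + q) ` lN_ball N = ?T ` lN_ball N"
    by (simp add: add.commute)
  have dens: "lborel = density (distr lborel borel ?T) (\<lambda>_. ennreal ((l/2)^CARD('n)))"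
    using lborel_affine[of "l/2" q] l by (simp add: ennreal_power)
  have Aeq: "?T ` lN_ball N = (\<lambda>x. (2/l) *\<^sub>R (x - q)) -` lN_ball N"
  proof (intro set_eqI iffI)
    fix x assume "x \<in> ?T ` lN_ball N" then show "x \<in> (\<lambda>x. (2/l) *\<^sub>R (x - q)) -` lN_ball N"
      using l by auto
  next
    fix x assume x: "x \<in> (\<lambda>x. (2/l) *\<^sub>R (x - q)) -` lN_ball N"
    have "x = ?T ((2/l) *\<^sub>R (x - q))" using l by (simp add: algebra_simps)
    then show "x \<in> ?T ` lN_ball N" using x by blast
  qed
  have A: "?T ` lN_ball N \<in> sets borel"
  proof -
    have fm: "(\<lambda>x::real^'n. (2/l) *\<^sub>R (x - q)) \<in> borel_measurable borel"
      by (intro borel_measurable_continuous_onI continuous_intros)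
    have "(\<lambda>x::real^'n. (2/l) *\<^sub>R (x - q)) -` lN_ball N \<inter> space borel \<in> sets borel"
      by (rule measurable_sets[OF fm lN_ball_borel])
    then show ?thesis unfolding Aeq by simp
  qed
  show ?thesis unfolding img GG_def
  proof (rule double_transform[OF dens])
    show "?T y \<in> ?T ` lN_ball N \<longleftrightarrow> y \<in> lN_ball N" for y
      using l by auto
    show "?T x - ?T y = (l/2) *\<^sub>R (x - y)" for x y
      by (simp add: algebra_simps)
  qed (use hm A l in auto)
qed



lemma frac_GG: "frac_form s E (Ifield i j) (Ifield k m) = GG E (hf (real CARD('n) + 2 * s) i j k m)"
  for i j k m :: "'n::finite"
  unfolding frac_form_def GG_def hf_def Ifield_def by (simp add: matrix_vector_mult_diff_distrib)

lemma hf_scale: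
  assumes "t > 0"
  shows "hf c i j k m (t *\<^sub>R w) = (t^2 / t powr c) * hf c i j k m w"
  using assms by (simp add: hf_def matrix_vector_mult_scaleR powr_mult power2_eq_square)

lemma GG_mult: "GG E (\<lambda>w. K * h w) = K * GG E h"
  by (simp add: GG_def)

lemma scale_arith:
  fixes l s :: real and n :: nat
  assumes "l > 0"
  shows "(l/2)^n * (l/2)^n * ((l/2)^2 / (l/2) powr (real n + 2 * s)) = l powr (real n + 2 - 2 * s) / 2 powr (real n + 2 - 2 * s)"
proof -
  define t where "t = l/2"
  have t: "t > 0" using assms by (simp add: t_def)
  have 1: "t^n * t^n * t^2 = t powr (real n + real n + 2)"
    using t by (simp only: powr_add powr_realpow powr_numeral)
  have "t^n * t^n * (t^2 / t powr (real n + 2 * s)) = (t^n * t^n * t^2) / t powr (real n + 2 * s)"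
    by simp
  also have "\<dots> = t powr (real n + real n + 2 - (real n + 2 * s))"
    unfolding 1 by (rule powr_diff[symmetric])
  also have "real n + real n + 2 - (real n + 2 * s) = real n + 2 - 2 * s" by simp
  also have "t powr (real n + 2 - 2 * s) = l powr (real n + 2 - 2 * s) / 2 powr (real n + 2 - 2 * s)"
    using assms by (simp add: t_def powr_divide)
  finally show ?thesis by (simp add: t_def)
qed



lemma offdiag:
  fixes i j k m :: "'n::{finite,linorder}"
  assumes "i < j" "k < m" "\<not> (i = k \<and> j = m)"
  shows "GG (lN_ball N) (hf c i j k m) = 0"
proof -
  have ex: "\<exists>r. \<forall>w. hf c i j k m (PF id (\<lambda>a. if a = r then -1 else 1) w) = - hf c i j k m w"
  proof -
    have n: "norm (PF id (\<lambda>a. if a = r then -1 else 1) w) = norm w" for r w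
      by (rule norm_PF) auto
    have comp: "PF id (\<lambda>a. if a = r then -1 else 1) w $ a = (if a = r then - w $ a else w $ a)" for r w a
      by (simp add: PF_def)
    have ij: "i \<noteq> j" "k \<noteq> m" using assms by auto
    show ?thesis
    proof (cases "i = k")
      case True
      then have "j \<noteq> m" "i \<noteq> m" "j \<noteq> k" using assms by auto
      then show ?thesis using True ij
        by (intro exI[of _ j]) (auto simp: hf_def n dot_formula comp)
    next
      case ik: False
      show ?thesis
      proof (cases "i = m")
        case True
        then have "j \<noteq> m" "j \<noteq> k" "k \<noteq> j" using assms by auto
        then show ?thesis using True ij ik
          by (intro exI[of _ j]) (auto simp: hf_def n dot_formula comp)
      next
        case im: False
        show ?thesis
        proof (cases "j = k")
          case True
          then have "j \<noteq> m" "m \<noteq> i" using assms by auto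
          then show ?thesis using True ij ik im
            by (intro exI[of _ i]) (auto simp: hf_def n dot_formula comp)
        next
          case jk: False
          then show ?thesis using ij ik im
            by (intro exI[of _ i]) (auto simp: hf_def n dot_formula comp)
        qed
      qed
    qed
  qed
  then obtain r where r: "\<And>w. hf c i j k m (PF id (\<lambda>a. if a = r then -1 else 1) w) = - hf c i j k m w"
    by blast
  have "GG (lN_ball N) (hf c i j k m) = GG (lN_ball N) (\<lambda>w. hf c i j k m (PF id (\<lambda>a. if a = r then -1 else 1) w))"
    by (rule GG_PF) auto
  also have "\<dots> = GG (lN_ball N) (\<lambda>w. (-1) * hf c i j k m w)"
    by (simp add: r)
  also have "\<dots> = - GG (lN_ball N) (hf c i j k m)"
    by (simp only: GG_mult)
  finally show ?thesis by simp
qed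

lemma diag:
  fixes i j i0 j0 :: "'n::{finite,linorder}"
  assumes "i \<noteq> j" "i0 \<noteq> j0"
  shows "GG (lN_ball N) (hf c i j i j) = GG (lN_ball N) (hf c i0 j0 i0 j0)"
proof -
  define j' where "j' = Transposition.transpose i i0 j"
  define \<pi> where "\<pi> = Transposition.transpose j' j0 \<circ> Transposition.transpose i i0"
  have j'i0: "j' \<noteq> i0" unfolding j'_def using assms(1) by (metis transpose_apply_first transpose_eq_imp_eq)
  have bij: "bij \<pi>" unfolding \<pi>_def by (simp add: bij_comp)
  have pi: "\<pi> i = i0" unfolding \<pi>_def using j'i0 assms(2) by (auto simp: transpose_def)
  have pj: "\<pi> j = j0" unfolding \<pi>_def j'_def by simp
  have n: "norm (PF \<pi> (\<lambda>_. 1) w) = norm w" for w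
    by (rule norm_PF[OF bij]) auto
  have "GG (lN_ball N) (hf c i j i j) = GG (lN_ball N) (\<lambda>w. hf c i j i j (PF \<pi> (\<lambda>_. 1) w))"
    by (rule GG_PF[OF bij]) auto
  also have "(\<lambda>w. hf c i j i j (PF \<pi> (\<lambda>_. 1) w)) = hf c i0 j0 i0 j0"
  proof -
    have comp: "PF \<pi> (\<lambda>_. 1) w $ a = w $ \<pi> a" for w a by (simp add: PF_def)
    show ?thesis using assms by (simp add: fun_eq_iff hf_def n dot_formula comp pi pj)
  qed
  finally show ?thesis .
qed



theorem corollary4p3:
  fixes s N :: real
  assumes "CARD('n::{finite,linorder}) \<ge> 2" and "0 < s" and "s < 1" and "1 \<le> N"
  shows "\<exists>C::real. \<forall>(l::real) (q::real^'n::{finite,linorder}) (i::'n::{finite,linorder}) j k m.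
           0 < l \<longrightarrow> i < j \<longrightarrow> k < m \<longrightarrow>
           frac_form s ((\<lambda>x. (l / 2) *\<^sub>R x + q) ` lN_ball N) (Ifield i j) (Ifield k m)
             = C * l powr (real CARD('n::{finite,linorder}) + 2 - 2 * s) * (if i = k \<and> j = m then 1 else 0)"
proof -
  obtain a b :: 'n where ab: "a \<noteq> b"
  proof -
    have "\<not> card (UNIV :: 'n set) \<le> Suc 0" using assms(1) by simp
    then have "\<not> (\<forall>x\<in>(UNIV::'n set). \<forall>y\<in>UNIV. x = y)"
      using card_le_Suc0_iff_eq[OF finite, of "UNIV :: 'n set"] by blast
    then show ?thesis using that by blast
  qed
  define c where "c = real CARD('n) + 2 * s"
  define C where "C = GG (lN_ball N) (hf c a b a b) / 2 powr (real CARD('n) + 2 - 2 * s)"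
  show ?thesis
  proof (intro exI allI impI)
    fix l :: real and q :: "real^'n::{finite,linorder}" and i j k m :: "'n::{finite,linorder}"
    assume l: "0 < l" and ij: "i < j" and km: "k < m"
    have "frac_form s ((\<lambda>x. (l / 2) *\<^sub>R x + q) ` lN_ball N) (Ifield i j) (Ifield k m)
        = GG ((\<lambda>x. (l / 2) *\<^sub>R x + q) ` lN_ball N) (hf c i j k m)"
      unfolding c_def by (rule frac_GG)
    also have "\<dots> = (l/2)^CARD('n) * (l/2)^CARD('n) * GG (lN_ball N) (\<lambda>w. hf c i j k m ((l/2) *\<^sub>R w))"
      by (rule GG_scale[OF l hf_meas])
    also have "(\<lambda>w. hf c i j k m ((l/2) *\<^sub>R w)) = (\<lambda>w. ((l/2)^2 / (l/2) powr c) * hf c i j k m w)"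
      using l by (simp add: hf_scale)
    also have "GG (lN_ball N) \<dots> = ((l/2)^2 / (l/2) powr c) * GG (lN_ball N) (hf c i j k m)"
      by (rule GG_mult)
    also have "(l/2)^CARD('n) * (l/2)^CARD('n) * (((l/2)^2 / (l/2) powr c) * GG (lN_ball N) (hf c i j k m))
        = ((l/2)^CARD('n) * (l/2)^CARD('n) * ((l/2)^2 / (l/2) powr c)) * GG (lN_ball N) (hf c i j k m)"
      by simp
    also have "(l/2)^CARD('n) * (l/2)^CARD('n) * ((l/2)^2 / (l/2) powr c)
        = l powr (real CARD('n) + 2 - 2 * s) / 2 powr (real CARD('n) + 2 - 2 * s)"
      unfolding c_def by (rule scale_arith[OF l])
    finally have eq: "frac_form s ((\<lambda>x. (l / 2) *\<^sub>R x + q) ` lN_ball N) (Ifield i j) (Ifield k m)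
        = l powr (real CARD('n) + 2 - 2 * s) / 2 powr (real CARD('n) + 2 - 2 * s) * GG (lN_ball N) (hf c i j k m)" .
    show "frac_form s ((\<lambda>x. (l / 2) *\<^sub>R x + q) ` lN_ball N) (Ifield i j) (Ifield k m)
             = C * l powr (real CARD('n) + 2 - 2 * s) * (if i = k \<and> j = m then 1 else 0)"
    proof (cases "i = k \<and> j = m")
      case True
      have "GG (lN_ball N) (hf c i j k m) = GG (lN_ball N) (hf c a b a b)"
        using True ij ab diag[of i j a b N c] by simp
      then show ?thesis using True unfolding eq C_def by simp
    next
      case False
      then show ?thesis unfolding eq using offdiag[OF ij km False] by auto
    qed
  qed
qed

end
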